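(* Let $m\ge1$, $N=2^m$, let $\mathcal{A}\subsetneq[0,N-1]$ (so that $\mathcal{A}^c=[0,N-1]\setminus\mathcal{A}$ is nonempty), and let $\mathbf{P}\in\mathbb{F}_2^{N\times N}$ be upper triangular with unit diagonal. Then $\mathcal{C}_{\boldsymbol{G}_N}([\max(\mathcal{A}^c)+1,N-1])$ is a decreasing monomial code of dimension $N-1-\max(\mathcal{A}^c)$ and $\mathcal{C}_{\boldsymbol{G}_N}([\max(\mathcal{A}^c)+1,N-1])\subset\mathcal{C}_{\mathbf{P}\boldsymbol{G}_N}(\mathcal{A})$.
   Context: $[\ell,u]=\{\ell,\dots,u\}$. $\boldsymbol{G}_N=\begin{pmatrix}1&0\\1&1\end{pmatrix}^{\otimes m}$ over $\mathbb{F}_2$, rows/columns indexed by $0,\dots,N-1$; $\mathcal{C}_{\mathbf{B}}(\mathcal{S})$ is the code spanned by the rows of $\mathbf{B}$ indexed by $\mathcal{S}$. For $i\in[0,N-1]$ write $\mathrm{bin}(i)=(i_0,\dots,i_{m-1})\in\mathbb{F}_2^m$ with $i=\sum_j i_j2^j$, and $\mathbf{x}^{b}=\prod_j x_j^{b_j}$ for $b\in\mathbb{F}_2^m$. Row $i$ of $\boldsymbol{G}_N$ equals the evaluation vector $\mathrm{ev}(\mathbf{x}^{\mathrm{bin}(N-1-i)})$, where $\mathrm{ev}(Q)$ lists the values of $Q\in\mathbb{F}_2[x_0,\dots,x_{m-1}]/(x_j^2-x_j)$ at the points of $\mathbb{F}_2^m$, column $k$ corresponding to the point $\mathrm{bin}(N-1-k)$.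 Thus $\mathcal{C}_{\boldsymbol{G}_N}(\mathcal{S})$ is the monomial code spanned by $\{\mathrm{ev}(f):f\in\mathcal{I}\}$ with $\mathcal{I}=\{\mathbf{x}^{\mathrm{bin}(N-1-i)}:i\in\mathcal{S}\}$. Order on monomials: $f\preceq_w g$ iff $f\mid g$; for $f=x_{i_1}\cdots x_{i_s}$, $g=x_{j_1}\cdots x_{j_s}$ of the same degree with $i_1<\dots<i_s$, $j_1<\dots<j_s$, $f\preceq_{sh}g$ iff $i_\ell\le j_\ell$ for all $\ell$; $f\preceq g$ iff there is a monomial $g^*$ with $f\preceq_{sh}g^*\preceq_w g$. A monomial set $\mathcal{I}$ is decreasing if $f\in\mathcal{I}$ and $g\preceq f$ imply $g\in\mathcal{I}$; a decreasing monomial code is a monomial code with decreasing monomial set. *)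

theory Defs
  imports Complex_Main "HOL-Library.Z2" "HOL-Library.Function_Algebras"
begin

text \<open>Vectors over F_2 of length N are functions nat => bit, zero outside [0,N-1].
  Matrices over F_2 are functions nat => nat => bit (row, column).\<close>

definition sc :: "bit \<Rightarrow> (nat \<Rightarrow> bit) \<Rightarrow> (nat \<Rightarrow> bit)" where
  "sc c v = (\<lambda>k. c * v k)"

global_interpretation f2: vector_space sc
  defines span2 = f2.span
    and dim2 = f2.dim
  by unfold_locales (auto simp: sc_def fun_eq_iff algebra_simps)

definition kron :: "nat \<Rightarrow> (nat \<Rightarrow> nat \<Rightarrow> bit) \<Rightarrow> (nat \<Rightarrow> nat \<Rightarrow> bit) \<Rightarrow> (nat \<Rightarrow> nat \<Rightarrow> bit)" where
  "kron b A B = (\<lambda>i k. A (i div b) (k div b) * B (i mod b) (k mod b))"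

definition G2 :: "nat \<Rightarrow> nat \<Rightarrow> bit" where
  "G2 i k = (if (i = 0 \<and> k = 0) \<or> (i = 1 \<and> k = 0) \<or> (i = 1 \<and> k = 1) then 1 else 0)"

fun GN :: "nat \<Rightarrow> nat \<Rightarrow> nat \<Rightarrow> bit" where
  "GN 0 = (\<lambda>i k. if i = 0 \<and> k = 0 then 1 else 0)"
| "GN (Suc m) = kron (2 ^ m) G2 (GN m)"

definition matmul :: "nat \<Rightarrow> (nat \<Rightarrow> nat \<Rightarrow> bit) \<Rightarrow> (nat \<Rightarrow> nat \<Rightarrow> bit) \<Rightarrow> (nat \<Rightarrow> nat \<Rightarrow> bit)" where
  "matmul N P B = (\<lambda>i k. \<Sum>j<N. P i j * B j k)"

definition row :: "nat \<Rightarrow> (nat \<Rightarrow> nat \<Rightarrow> bit) \<Rightarrow> nat \<Rightarrow> (nat \<Rightarrow> bit)" where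
  "row N B i = (\<lambda>k. if k < N then B i k else 0)"

definition code :: "nat \<Rightarrow> (nat \<Rightarrow> nat \<Rightarrow> bit) \<Rightarrow> nat set \<Rightarrow> (nat \<Rightarrow> bit) set" where
  "code N B S = span2 (row N B ` S)"

text \<open>Monomials in x_0..x_{m-1} modulo x_j^2 = x_j, represented by their variable sets.\<close>
definition monomials :: "nat \<Rightarrow> nat set set" where
  "monomials m = Pow {..<m}"

definition bin :: "nat \<Rightarrow> nat \<Rightarrow> bool" where
  "bin i j = odd (i div 2 ^ j)"

text \<open>Evaluation vector: column k corresponds to the point bin(N-1-k).\<close>
definition ev :: "nat \<Rightarrow> nat set \<Rightarrow> (nat \<Rightarrow> bit)" where
  "ev m f = (\<lambda>k. if k < 2 ^ m then (\<Prod>j\<in>f. if bin (2 ^ m - 1 - k) j then 1 else 0) else 0)"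

definition wle :: "nat set \<Rightarrow> nat set \<Rightarrow> bool" where
  "wle f g \<longleftrightarrow> f \<subseteq> g"

definition shle :: "nat set \<Rightarrow> nat set \<Rightarrow> bool" where
  "shle f g \<longleftrightarrow> card f = card g \<and>
     (\<forall>l < card f. sorted_list_of_set f ! l \<le> sorted_list_of_set g ! l)"

definition mle :: "nat \<Rightarrow> nat set \<Rightarrow> nat set \<Rightarrow> bool" where
  "mle m f g \<longleftrightarrow> (\<exists>g' \<in> monomials m. shle f g' \<and> wle g' g)"

definition decreasing :: "nat \<Rightarrow> nat set set \<Rightarrow> bool" where
  "decreasing m I \<longleftrightarrow> I \<subseteq> monomials m \<and>
     (\<forall>f \<in> I. \<forall>g \<in> monomials m. mle m g f \<longrightarrow> g \<in> I)"

definition monomial_code :: "nat \<Rightarrow> nat set set \<Rightarrow> (nat \<Rightarrow> bit) set" where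
  "monomial_code m I = span2 (ev m ` I)"

definition decreasing_monomial_code :: "nat \<Rightarrow> (nat \<Rightarrow> bit) set \<Rightarrow> bool" where
  "decreasing_monomial_code m C \<longleftrightarrow>
     (\<exists>I. decreasing m I \<and> C = monomial_code m I)"

end

theory Submission
  imports Defs "HOL-Library.Nat_Bijection"
begin


lemma mem_decode_bit: "x \<in> set_decode n \<longleftrightarrow> bit n x"
  by (simp add: set_decode_def bit_iff_odd)

lemma decode_sub: "(t::nat) < 2 ^ m \<Longrightarrow> set_decode t \<subseteq> {..<m}"
proof
  fix x assume t: "t < 2 ^ m" and x: "x \<in> set_decode t"
  then have "odd (t div 2 ^ x)" by (simp add: set_decode_def)
  then have "t div 2 ^ x \<noteq> 0" by (metis even_zero)
  then have "2 ^ x \<le> t" by (simp add: div_eq_0_iff not_less)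
  with t have "(2::nat) ^ x < 2 ^ m" using le_less_trans by blast
  then show "x \<in> {..<m}" by simp
qed

lemma encode_sorted: "finite g \<Longrightarrow> set_encode g = (\<Sum>l<card g. 2 ^ (sorted_list_of_set g ! l))"
proof -
  assume f: "finite g"
  have "set_encode g = sum ((^) 2) (set (sorted_list_of_set g))" using f by (simp add: set_encode_def)
  also have "\<dots> = sum_list (map ((^) 2) (sorted_list_of_set g))"
    by (simp add: sum_list_distinct_conv_sum_set)
  also have "\<dots> = (\<Sum>l<card g. 2 ^ (sorted_list_of_set g ! l))"
    by (simp add: sum_list_sum_nth atLeast0LessThan)
  finally show ?thesis .
qed

lemma mle_encode:
  assumes "mle m g f" "finite f" "finite g"
  shows "set_encode g \<le> set_encode f"
proof -
  obtain g' where g': "g' \<in> monomials m" "shle g g'" "wle g' f" using assms(1) by (auto simp: mle_def)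
  have fg': "finite g'" using g'(1) by (auto simp: monomials_def intro: finite_subset)
  have "set_encode g' \<le> set_encode f" using g'(3) assms(2) by (simp add: wle_def set_encode_def sum_mono2)
  moreover have "set_encode g \<le> set_encode g'"
  proof -
    have c: "card g = card g'" and le: "\<And>l. l < card g \<Longrightarrow> sorted_list_of_set g ! l \<le> sorted_list_of_set g' ! l"
      using g'(2) by (auto simp: shle_def)
    have "(\<Sum>l<card g. (2::nat) ^ (sorted_list_of_set g ! l)) \<le> (\<Sum>l<card g. 2 ^ (sorted_list_of_set g' ! l))"
      by (rule sum_mono) (simp add: le)
    then show ?thesis using encode_sorted[OF assms(3)] encode_sorted[OF fg'] c by simp
  qed
  ultimately show ?thesis by simp
qed

lemma decode_compl:
  assumes "(t::nat) < 2 ^ m"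
  shows "set_decode (2 ^ m - 1 - t) = {..<m} - set_decode t"
proof -
  let ?D = "set_decode t"
  have D: "?D \<subseteq> {..<m}" using decode_sub[OF assms] .
  have "set_encode ({..<m} - ?D) + set_encode ?D = set_encode {..<m}"
  proof -
    have u: "({..<m} - ?D) \<union> ?D = {..<m}" using D by blast
    have "set_encode (({..<m} - ?D) \<union> ?D) = set_encode ({..<m} - ?D) + set_encode ?D"
      unfolding set_encode_def by (rule sum.union_disjoint) auto
    then show ?thesis using u by simp
  qed
  also have "\<dots> = 2 ^ m - 1" unfolding set_encode_def using mask_eq_sum_exp[of m, where 'a=nat] by (simp add: lessThan_def)
  finally have "set_encode ({..<m} - ?D) = 2 ^ m - 1 - t" by simp
  then have "set_decode (2 ^ m - 1 - t) = set_decode (set_encode ({..<m} - ?D))" by simp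
  also have "\<dots> = {..<m} - ?D" by simp
  finally show ?thesis .
qed

lemma G2_char: "a < 2 \<Longrightarrow> b < 2 \<Longrightarrow> G2 a b = (if set_decode b \<subseteq> set_decode a then 1 else 0)"
proof -
  assume "a < 2" "b < 2"
  then have "a = 0 \<or> a = 1" "b = 0 \<or> b = 1" by auto
  moreover have "set_decode 1 = {0}"
  proof (rule set_eqI)
    fix x show "x \<in> set_decode 1 \<longleftrightarrow> x \<in> {0}" by (cases x) simp_all
  qed
  ultimately show ?thesis by (auto simp: G2_def)
qed

lemma sub_split: "set_decode k \<subseteq> set_decode i \<longleftrightarrow>
   set_decode (k mod 2 ^ m) \<subseteq> set_decode (i mod 2 ^ m) \<and> set_decode (k div 2 ^ m) \<subseteq> set_decode (i div 2 ^ m)"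
proof -
  have a: "\<And>n x. x \<in> set_decode (n mod 2 ^ m) \<longleftrightarrow> x < m \<and> x \<in> set_decode n"
    by (simp add: mem_decode_bit flip: take_bit_eq_mod add: bit_take_bit_iff)
  have b: "\<And>n x. x \<in> set_decode (n div 2 ^ m) \<longleftrightarrow> (m + x) \<in> set_decode n"
    by (simp add: mem_decode_bit flip: drop_bit_eq_div add: bit_drop_bit_eq)
  show ?thesis
  proof
    assume "set_decode k \<subseteq> set_decode i" then show "set_decode (k mod 2 ^ m) \<subseteq> set_decode (i mod 2 ^ m) \<and> set_decode (k div 2 ^ m) \<subseteq> set_decode (i div 2 ^ m)"
      by (auto simp: a b)
  next
    assume h: "set_decode (k mod 2 ^ m) \<subseteq> set_decode (i mod 2 ^ m) \<and> set_decode (k div 2 ^ m) \<subseteq> set_decode (i div 2 ^ m)"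
    show "set_decode k \<subseteq> set_decode i"
    proof
      fix x assume x: "x \<in> set_decode k"
      show "x \<in> set_decode i"
      proof (cases "x < m")
        case True then show ?thesis using h x a by blast
      next
        case False
        then obtain y where y: "x = m + y" by (metis le_add_diff_inverse not_less)
        then show ?thesis using h x b by blast
      qed
    qed
  qed
qed



lemma GN_char: "GN m i k = (if i < 2 ^ m \<and> k < 2 ^ m \<and> set_decode k \<subseteq> set_decode i then 1 else 0)"
proof (induction m arbitrary: i k)
  case 0
  then show ?case by auto
next
  case (Suc m)
  have e: "GN (Suc m) i k = G2 (i div 2 ^ m) (k div 2 ^ m) *
      (if set_decode (k mod 2 ^ m) \<subseteq> set_decode (i mod 2 ^ m) then 1 else 0)"
    by (simp add: kron_def Suc.IH)
  have ii: "i < 2 ^ Suc m \<longleftrightarrow> i div 2 ^ m < 2" "k < 2 ^ Suc m \<longleftrightarrow> k div 2 ^ m < 2"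
    by (auto simp: div_less_iff_less_mult mult.commute)
  show ?case
  proof (cases "i div 2 ^ m < 2 \<and> k div 2 ^ m < 2")
    case True
    then have G: "G2 (i div 2 ^ m) (k div 2 ^ m) = (if set_decode (k div 2 ^ m) \<subseteq> set_decode (i div 2 ^ m) then 1 else 0)"
      by (simp add: G2_char)
    have ik: "i < 2 ^ Suc m" "k < 2 ^ Suc m" using ii True by auto
    show ?thesis unfolding e G using ik sub_split[of k i m] by simp
  next
    case False
    then have "G2 (i div 2 ^ m) (k div 2 ^ m) = 0" unfolding G2_def by auto
    have "\<not> (i < 2 ^ Suc m \<and> k < 2 ^ Suc m)" using ii False by blast
    then show ?thesis unfolding e using \<open>G2 (i div 2 ^ m) (k div 2 ^ m) = 0\<close> by auto
  qed
qed



lemma sum_fun_apply: "(sum f A) x = (\<Sum>a\<in>A. (f a :: 'x \<Rightarrow> 'b::comm_monoid_add) x)"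
proof (cases "finite A")
  case True then show ?thesis by (induction A rule: finite_induct) simp_all
next
  case False then show ?thesis by simp
qed

lemma prod_bit: "finite F \<Longrightarrow> (\<Prod>j\<in>F. if P j then (1::bit) else 0) = (if \<forall>j\<in>F. P j then 1 else 0)"
  by (induction F rule: finite_induct) auto

lemma row_ev:
  assumes i: "i < 2 ^ m"
  shows "row (2 ^ m) (GN m) i = ev m (set_decode (2 ^ m - 1 - i))"
proof (rule ext)
  fix k
  show "row (2 ^ m) (GN m) i k = ev m (set_decode (2 ^ m - 1 - i)) k"
  proof (cases "k < 2 ^ m")
    case False then show ?thesis by (simp add: row_def ev_def)
  next
    case True
    have Dk: "set_decode k \<subseteq> {..<m}" using decode_sub[OF True] .
    have Di: "set_decode i \<subseteq> {..<m}" using decode_sub[OF i] .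
    have bk: "\<And>j. bin (2 ^ m - 1 - k) j \<longleftrightarrow> j \<in> {..<m} - set_decode k"
    proof -
      fix j
      have "bin (2 ^ m - 1 - k) j \<longleftrightarrow> j \<in> set_decode (2 ^ m - 1 - k)" by (simp add: bin_def set_decode_def)
      then show "bin (2 ^ m - 1 - k) j \<longleftrightarrow> j \<in> {..<m} - set_decode k" by (simp only: decode_compl[OF True])
    qed
    have bk': "\<And>j. bin (2 ^ m - Suc k) j \<longleftrightarrow> j \<in> {..<m} - set_decode k"
      using bk by simp
    have "ev m (set_decode (2 ^ m - 1 - i)) k = (if \<forall>j\<in>{..<m} - set_decode i. j \<in> {..<m} - set_decode k then 1 else 0)"
      unfolding ev_def decode_compl[OF i] using True by (simp add: bk' prod_bit)
    also have "(\<forall>j\<in>{..<m} - set_decode i. j \<in> {..<m} - set_decode k) \<longleftrightarrow> set_decode k \<subseteq> set_decode i"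
      using Dk Di by blast
    finally show ?thesis using True i by (simp add: row_def GN_char)
  qed
qed

lemma GN_diag: "i < 2 ^ m \<Longrightarrow> GN m i i = 1"
  by (simp add: GN_char)

lemma GN_upper: "i < k \<Longrightarrow> GN m i k = 0"
  using subset_decode_imp_le[of k i] by (auto simp: GN_char)

lemma rows_indep:
  assumes "b \<le> 2 ^ m"
  shows "f2.independent (row (2 ^ m) (GN m) ` {a..<b})"
  using assms
proof (induction b)
  case 0 then show ?case by (simp add: f2.independent_empty)
next
  case (Suc b)
  show ?case
  proof (cases "b < a")
    case True
    then have "{a..<Suc b} = {a..<b}" by auto
    then show ?thesis using Suc by simp
  next
    case False
    then have e: "{a..<Suc b} = insert b {a..<b}" by auto
    have bN: "b < 2 ^ m" using Suc.prems by simp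
    have sub: "span2 (row (2 ^ m) (GN m) ` {a..<b}) \<subseteq> {v. v b = 0}"
    proof (rule f2.span_minimal)
      show "row (2 ^ m) (GN m) ` {a..<b} \<subseteq> {v. v b = 0}"
        using bN by (auto simp: row_def GN_upper)
      show "f2.subspace {v. v b = (0::bit)}"
        by (simp add: f2.subspace_def sc_def)
    qed
    have "row (2 ^ m) (GN m) b b = 1" using bN by (simp add: row_def GN_diag)
    then have "row (2 ^ m) (GN m) b \<notin> span2 (row (2 ^ m) (GN m) ` {a..<b})" using sub by auto
    then show ?thesis unfolding e image_insert
      using Suc by (intro f2.independent_insertI) auto
  qed
qed

lemma rows_inj: "inj_on (row (2 ^ m) (GN m)) {..<2 ^ m}"
proof (rule inj_onI)
  fix i j assume i: "i \<in> {..<2 ^ m}" and j: "j \<in> {..<2 ^ m}" and e: "row (2 ^ m) (GN m) i = row (2 ^ m) (GN m) j"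
  show "i = j"
  proof (rule ccontr)
    assume "i \<noteq> j"
    then consider "i < j" | "j < i" by linarith
    then show False
    proof cases
      case 1
      have "row (2 ^ m) (GN m) i j = 0" using 1 j by (simp add: row_def GN_upper)
      moreover have "row (2 ^ m) (GN m) j j = 1" using j by (simp add: row_def GN_diag)
      ultimately show False using e by simp
    next
      case 2
      have "row (2 ^ m) (GN m) j i = 0" using 2 i by (simp add: row_def GN_upper)
      moreover have "row (2 ^ m) (GN m) i i = 1" using i by (simp add: row_def GN_diag)
      ultimately show False using e by simp
    qed
  qed
qed



theorem proposition1:
  fixes m N :: nat and A :: "nat set" and P :: "nat \<Rightarrow> nat \<Rightarrow> bit"
  assumes "m \<ge> 1" and "N = 2 ^ m"
    and "A \<subseteq> {0..N-1}" and "A \<noteq> {0..N-1}"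
    and "\<forall>i<N. P i i = 1"
    and "\<forall>i<N. \<forall>j<N. j < i \<longrightarrow> P i j = 0"
  shows "decreasing_monomial_code m (code N (GN m) {Max ({0..N-1} - A) + 1..N-1})
       \<and> dim2 (code N (GN m) {Max ({0..N-1} - A) + 1..N-1}) = N - 1 - Max ({0..N-1} - A)
       \<and> code N (GN m) {Max ({0..N-1} - A) + 1..N-1} \<subseteq> code N (matmul N P (GN m)) A"
proof -
  define M where "M = Max ({0..N-1} - A)"
  have Npos: "N > 0" using assms(2) by simp
  have fin: "finite ({0..N-1} - A)" by simp
  have ne: "{0..N-1} - A \<noteq> {}" using assms(3,4) by blast
  have MA: "M \<in> {0..N-1} - A" unfolding M_def using Max_in[OF fin ne] .
  have MN: "M < N" using MA Npos by auto
  have inA: "\<And>i. M < i \<Longrightarrow> i < N \<Longrightarrow> i \<in> A"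
  proof (rule ccontr)
    fix i assume "M < i" "i < N" "i \<notin> A"
    then have "i \<in> {0..N-1} - A" by auto
    then have "i \<le> M" unfolding M_def using Max_ge[OF fin] by blast
    with \<open>M < i\<close> show False by simp
  qed
  define S where "S = {M + 1..N - 1}"
  have S: "S = {Suc M..<N}" unfolding S_def using Npos by auto
  let ?G = "GN m"
  define K where "K = N - 1 - M"
  define I where "I = set_decode ` {..<K}"
  have imgS: "(\<lambda>i. N - 1 - i) ` S = {..<K}"
  proof
    show "(\<lambda>i. N - 1 - i) ` S \<subseteq> {..<K}" unfolding S K_def by auto
    show "{..<K} \<subseteq> (\<lambda>i. N - 1 - i) ` S"
    proof
      fix t assume t: "t \<in> {..<K}"
      then have "N - 1 - t \<in> S" "N - 1 - (N - 1 - t) = t" unfolding S K_def by auto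
      then show "t \<in> (\<lambda>i. N - 1 - i) ` S" by (metis image_eqI)
    qed
  qed
  have rowS: "row N ?G ` S = ev m ` I"
  proof -
    have "row N ?G ` S = (\<lambda>i. ev m (set_decode (N - 1 - i))) ` S"
      using row_ev[of _ m] assms(2) unfolding S by (intro image_cong) auto
    also have "\<dots> = ev m ` set_decode ` (\<lambda>i. N - 1 - i) ` S" by (simp add: image_image)
    finally show ?thesis using imgS I_def by simp
  qed
  have dec: "decreasing m I"
    unfolding decreasing_def
  proof (intro conjI ballI impI)
    show "I \<subseteq> monomials m"
    proof
      fix f assume "f \<in> I"
      then obtain t where "t < K" "f = set_decode t" unfolding I_def by auto
      then have "t < 2 ^ m" using assms(2) K_def by simp
      then show "f \<in> monomials m" using \<open>f = set_decode t\<close> decode_sub by (auto simp: monomials_def)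
    qed
  next
    fix f g assume f: "f \<in> I" and g: "g \<in> monomials m" and mg: "mle m g f"
    then obtain t where t: "t < K" "f = set_decode t" unfolding I_def by auto
    have fg: "finite g" using g by (auto simp: monomials_def intro: finite_subset)
    have "set_encode g \<le> set_encode f" using mle_encode[OF mg _ fg] t by simp
    then have "set_encode g < K" using t by simp
    moreover have "g = set_decode (set_encode g)" using fg by simp
    ultimately show "g \<in> I" unfolding I_def by blast
  qed
  have p1: "decreasing_monomial_code m (code N ?G S)"
    unfolding decreasing_monomial_code_def code_def monomial_code_def rowS using dec by blast
  have ind: "f2.independent (row N ?G ` S)" unfolding S assms(2) by (rule rows_indep) simp
  have inj: "inj_on (row N ?G) S"
    using rows_inj[of m] unfolding assms(2)[symmetric] S by (rule inj_on_subset) auto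
  have p2: "dim2 (code N ?G S) = K"
    unfolding code_def using f2.dim_span_eq_card_independent[OF ind] card_image[OF inj]
    unfolding S K_def by simp
  let ?C = "code N (matmul N P ?G) A"
  have key: "\<And>n i. N - i = n \<Longrightarrow> M < i \<Longrightarrow> i < N \<Longrightarrow> row N ?G i \<in> ?C"
  proof -
    fix n
    show "\<And>i. N - i = n \<Longrightarrow> M < i \<Longrightarrow> i < N \<Longrightarrow> row N ?G i \<in> ?C"
    proof (induction n rule: less_induct)
      case (less n i)
      have dec: "row N (matmul N P ?G) i = row N ?G i + (\<Sum>j\<in>{i<..<N}. sc (P i j) (row N ?G j))"
      proof (rule ext)
        fix k
        show "row N (matmul N P ?G) i k = (row N ?G i + (\<Sum>j\<in>{i<..<N}. sc (P i j) (row N ?G j))) k"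
        proof (cases "k < N")
          case False then show ?thesis by (simp add: row_def sum_fun_apply sc_def)
        next
          case True
          have u: "{..<N} = {..<i} \<union> insert i {i<..<N}" using less.prems(3) by auto
          have "(\<Sum>j<N. P i j * ?G j k) = (\<Sum>j<i. P i j * ?G j k) + (P i i * ?G i k + (\<Sum>j\<in>{i<..<N}. P i j * ?G j k))"
            unfolding u by (subst sum.union_disjoint) auto
          also have "(\<Sum>j<i. P i j * ?G j k) = 0" using assms(6) less.prems(3) by (intro sum.neutral) auto
          also have "P i i = 1" using assms(5) less.prems(3) by simp
          finally show ?thesis using True by (simp add: row_def matmul_def sum_fun_apply sc_def)
        qed
      qed
      have r: "row N (matmul N P ?G) i \<in> ?C"
        unfolding code_def using inA[OF less.prems(2,3)] by (intro f2.span_base) auto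
      have s: "(\<Sum>j\<in>{i<..<N}. sc (P i j) (row N ?G j)) \<in> ?C"
        unfolding code_def
      proof (intro f2.span_sum f2.span_scale)
        fix j assume j: "j \<in> {i<..<N}"
        then have "row N ?G j \<in> ?C" using less.prems by (intro less.IH[of "N - j"]) auto
        then show "row N ?G j \<in> span2 (row N (matmul N P ?G) ` A)" unfolding code_def .
      qed
      have "row N ?G i = row N (matmul N P ?G) i - (\<Sum>j\<in>{i<..<N}. sc (P i j) (row N ?G j))"
        using dec by simp
      then show ?case using r s unfolding code_def by (metis f2.span_diff)
    qed
  qed
  have p3: "code N ?G S \<subseteq> ?C"
    unfolding code_def[of N ?G S]
  proof (rule f2.span_minimal)
    show "row N ?G ` S \<subseteq> ?C" using key unfolding S by auto
    show "f2.subspace ?C" unfolding code_def by (rule f2.subspace_span)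
  qed
  show ?thesis using p1 p2 p3 unfolding S_def M_def K_def by simp
qed

end
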